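(* Let $\alpha>0$, $T:=T(\alpha)$, and let $\varphi_1,\dots,\varphi_T$ be positive reals with $\frac{T+1}{T}\le\varphi_k\le\frac{T}{T-1}$ for all $k$ (the upper bound being void when $T=1$) and $\prod_{j=1}^T\varphi_j=T/\alpha$; extend periodically by $\varphi_{T+j}:=\varphi_j$ for all $j\ge1$. Set $\psi_i:=\prod_{j=1}^i\varphi_j$ (with $\psi_0=1$) and $$a_t:=\max\Big\{\tfrac{T-i+t-1}{\alpha}\psi_i:\ 0\le i<T\Big\},\qquad t\ge1.$$ Let $(\chi_t)_{t\ge1}$ be defined by $\chi_t:=\max\{a_t,\frac{t-1}{\alpha}\chi_1,\dots,\frac1\alpha\chi_{t-1}\}$. Then $\chi_t=\psi_{t+T-1}=\prod_{j=1}^{t+T-1}\varphi_j$ for all $t\ge1$.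
   Context: For $\alpha>0$, let $T=T(\alpha)\in\mathbb N$ be the unique positive integer with $\frac{(T-1)^T}{T^{T-1}}<\alpha\le\frac{T^{T+1}}{(T+1)^T}$, and define $\nu(\alpha):=\frac1T\log\frac T\alpha$. *)

theory Defs
  imports Complex_Main
begin

definition T_of :: "real \<Rightarrow> nat" where
  "T_of \<alpha> = (THE T. T > 0 \<and>
      (real T - 1) ^ T / real T ^ (T - 1) < \<alpha> \<and>
      \<alpha> \<le> real T ^ (T + 1) / (real T + 1) ^ T)"

end

theory Submission
  imports Defs
begin

theorem proposition2:
  fixes \<alpha> :: real and \<phi> :: "nat \<Rightarrow> real" and \<chi> :: "nat \<Rightarrow> real" and T :: nat
  assumes alpha_pos: "\<alpha> > 0"
    and T_def: "T = T_of \<alpha>"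
    and phi_pos: "\<forall>k\<in>{1..T}. \<phi> k > 0"
    and phi_lower: "\<forall>k\<in>{1..T}. (real T + 1) / real T \<le> \<phi> k"
    and phi_upper: "T \<ge> 2 \<longrightarrow> (\<forall>k\<in>{1..T}. \<phi> k \<le> real T / (real T - 1))"
    and phi_prod: "(\<Prod>j=1..T. \<phi> j) = real T / \<alpha>"
    and phi_periodic: "\<forall>j\<ge>1. \<phi> (T + j) = \<phi> j"
    and chi_rec: "\<forall>t\<ge>1. \<chi> t =
        Max ({Max {(real T - real i + real t - 1) / \<alpha> * (\<Prod>j=1..i. \<phi> j) | i. i < T}}
             \<union> {real (t - j) / \<alpha> * \<chi> j | j. j \<in> {1..<t}})"
  shows "\<forall>t\<ge>1. \<chi> t = (\<Prod>j=1..t + T - 1. \<phi> j)"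
proof -
  have Tpos: "T > 0"
  proof (rule ccontr)
    assume "\<not> T > 0"
    then have "T = 0" by simp
    with phi_prod show False by simp
  qed
  define P where "P n = (\<Prod>j=1..n. \<phi> j)" for n
  have phi_all: "\<phi> j > 0 \<and> (real T+1)/real T \<le> \<phi> j \<and> (T\<ge>2 \<longrightarrow> \<phi> j \<le> real T/(real T-1))"
    if "j \<ge> 1" for j
    using that
  proof (induction j rule: less_induct)
    case (less j)
    show ?case
    proof (cases "j \<le> T")
      case True
      then have "j \<in> {1..T}" using less.prems by simp
      then show ?thesis using bspec[OF phi_pos, of j] bspec[OF phi_lower, of j] phi_upper by simp
    next
      case False
      have jj: "j = T + (j - T)" using False by simp
      have "\<phi> (T + (j - T)) = \<phi> (j - T)" using spec[OF phi_periodic, of "j - T"] False by linarith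
      then have "\<phi> j = \<phi> (j - T)" using jj by simp
      moreover have "j - T < j" "j - T \<ge> 1" using False Tpos by auto
      ultimately show ?thesis using less.IH by metis
    qed
  qed
  have PSuc: "P (Suc n) = P n * \<phi> (Suc n)" for n
    unfolding P_def by (simp add: prod.cl_ivl_Suc)
  have P0: "P 0 = 1" unfolding P_def by simp
  have Ppos: "P n > 0" for n
    by (induction n) (auto simp: P0 PSuc phi_all)
  have PT: "P (n+T) = P n * (T/\<alpha>)" for n
  proof (induction n)
    case 0
    then show ?case using phi_prod by (simp add: P_def)
  next
    case (Suc n)
    have "P (Suc n + T) = P (n+T) * \<phi> (Suc n + T)" using PSuc by simp
    also have "\<phi> (Suc n + T) = \<phi> (Suc n)" using phi_periodic
      by (metis add.commute le_add1 plus_1_eq_Suc)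
    finally show ?case using Suc PSuc by simp
  qed
  have Plow: "P (m+k) \<ge> P m * ((real T+1)/real T)^k" for m k
  proof (induction k)
    case 0
    then show ?case by simp
  next
    case (Suc k)
    have "P m * ((real T+1)/real T)^Suc k = (P m * ((real T+1)/real T)^k) * ((real T+1)/real T)" by simp
    also have "\<dots> \<le> P (m+k) * \<phi> (Suc (m+k))"
      using Suc phi_all[of "Suc (m+k)"] Ppos[of m] Ppos[of "m+k"]
      by (intro mult_mono) auto
    finally show ?case using PSuc by simp
  qed
  have Pup: "P (m+k) \<le> P m * (real T/(real T-1))^k" if "T \<ge> 2" for m k
  proof (induction k)
    case 0
    then show ?case by simp
  next
    case (Suc k)
    have "P (m + Suc k) = P (m+k) * \<phi> (Suc (m+k))" using PSuc by simp
    also have "\<dots> \<le> (P m * (real T/(real T-1))^k) * (real T/(real T-1))"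
      using Suc phi_all[of "Suc (m+k)"] Ppos[of "m+k"] that
      by (intro mult_mono) auto
    finally show ?case by (simp add: ac_simps)
  qed
  have G: "P (m+k) \<ge> P m * (1 + k/T)" for m k
  proof -
    have "1 + k * (1/real T) \<le> (1 + 1/real T)^k"
      proof (rule Bernoulli_inequality)
      have "0 \<le> 1/real T" by simp
      then show "-1 \<le> 1/real T" by linarith
    qed
    moreover have "(1 + 1/real T) = (real T+1)/real T" using Tpos by (simp add: field_simps)
    ultimately have "1 + k/T \<le> ((real T+1)/real T)^k" by simp
    then have "P m * (1 + k/T) \<le> P m * ((real T+1)/real T)^k"
      using Ppos[of m] by (intro mult_left_mono) auto
    then show ?thesis using Plow[of m k] by linarith
  qed
  have K: "real k/\<alpha> * P m \<le> P (m+k)" for m k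
  proof (cases "k \<ge> T")
    case True
    have "P (m+k) = P (m + (k-T) + T)" using True by simp
    also have "\<dots> = P (m+(k-T)) * (T/\<alpha>)" by (rule PT)
    finally have e: "P (m+k) = P (m+(k-T)) * (T/\<alpha>)" .
    have "P m * (1 + real (k-T)/T) * (T/\<alpha>) \<le> P (m+(k-T)) * (T/\<alpha>)"
      using G[of m "k-T"] alpha_pos by (intro mult_right_mono) auto
    moreover have "P m * (1 + real (k-T)/T) * (T/\<alpha>) = real k/\<alpha> * P m"
      using True Tpos by (simp add: field_simps of_nat_diff)
    ultimately show ?thesis using e by linarith
  next
    case False
    show ?thesis
    proof (cases "T \<ge> 2")
      case False2: False
      with False Tpos have "k = 0" by linarith
      then show ?thesis using Ppos[of m] by simp
    next
      case True
      define s where "s = T - k"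
      have Tk: "T = k + s" using False s_def by simp
      have "P m * (T/\<alpha>) = P (m+T)" using PT by simp
      also have "\<dots> = P ((m+k)+s)" using Tk by (simp add: add.assoc)
      also have "\<dots> \<le> P (m+k) * (real T/(real T-1))^s" using Pup True by blast
      finally have h1: "P m * (T/\<alpha>) \<le> P (m+k) * (real T/(real T-1))^s" .
      have "1 + s * (-1/real T) \<le> (1 + (-1/real T))^s"
        proof (rule Bernoulli_inequality)
        have "1/real T \<le> 1" using Tpos by simp
        then show "-1 \<le> -1/real T" by simp
      qed
      moreover have "1 + (-1/real T) = (real T-1)/real T" using Tpos by (simp add: field_simps)
      moreover have "1 + s * (-1/real T) = k/T"
      proof -
        have "real T = real k + real s" using Tk by simp
        moreover have "real T > 0" using Tpos by simp
        ultimately show ?thesis by (simp add: field_simps)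
      qed
      ultimately have b: "k/T \<le> ((real T-1)/real T)^s" by simp
      have inv: "(real T/(real T-1))^s * ((real T-1)/real T)^s = (1::real)"
        using True by (simp add: power_mult_distrib[symmetric])
      have "P m * (T/\<alpha>) * ((real T-1)/real T)^s \<le> P (m+k) * (real T/(real T-1))^s * ((real T-1)/real T)^s"
        using h1 True by (intro mult_right_mono) auto
      also have "\<dots> = P (m+k)" using inv by (simp add: mult.assoc)
      finally have h2: "P m * (T/\<alpha>) * ((real T-1)/real T)^s \<le> P (m+k)" .
      have "P m * (T/\<alpha>) * (k/T) \<le> P m * (T/\<alpha>) * ((real T-1)/real T)^s"
        using b Ppos[of m] alpha_pos by (intro mult_left_mono) auto
      moreover have "P m * (T/\<alpha>) * (k/T) = real k/\<alpha> * P m" using Tpos by simp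
      ultimately show ?thesis using h2 by linarith
    qed
  qed
  have main: "\<chi> t = P (t+T-1)" if "t \<ge> 1" for t
    using that
  proof (induction t rule: less_induct)
    case (less t)
    define x where "x = P (t+T-1)"
    define A where "A = {(real T - real i + real t - 1) / \<alpha> * (\<Prod>j=1..i. \<phi> j) | i. i < T}"
    define B where "B = {real (t - j) / \<alpha> * \<chi> j | j. j \<in> {1..<t}}"
    have ch: "\<chi> t = Max ({Max A} \<union> B)" unfolding A_def B_def using mp[OF spec[OF chi_rec, of t] less.prems] .
    have Aim: "A = (\<lambda>i. (real T - real i + real t - 1) / \<alpha> * P i) ` {..<T}"
      unfolding A_def P_def by auto
    have Bim: "B = (\<lambda>j. real (t - j) / \<alpha> * \<chi> j) ` {1..<t}"
      unfolding B_def by blast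
    have fA: "finite A" "A \<noteq> {}" using Aim Tpos by auto
    have fB: "finite B" using Bim by auto
    have Ale: "a \<le> x" if aA: "a \<in> A" for a
    proof -
      obtain i where i: "i < T" "a = (real T - real i + real t - 1) / \<alpha> * P i"
        using aA Aim by auto
      have "real T - real i + real t - 1 = real (t+T-1-i)" using i less.prems by (simp add: of_nat_diff)
      moreover have "i + (t+T-1-i) = t+T-1" using i less.prems by simp
      ultimately show ?thesis using K[of "t+T-1-i" i] i x_def by (simp add: algebra_simps)
    qed
    have Ble: "b \<le> x" if bB: "b \<in> B" for b
    proof -
      obtain j where j: "j \<in> {1..<t}" "b = real (t - j) / \<alpha> * \<chi> j"
        using bB Bim by auto
      have "\<chi> j = P (j+T-1)" using less.IH j by auto
      moreover have "(j+T-1) + (t-j) = t+T-1" using j Tpos by auto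
      ultimately show ?thesis using K[of "t-j" "j+T-1"] j x_def by simp
    qed
    have MA: "Max A \<le> x" using fA Ale by simp
    have wit: "x \<le> Max A \<or> x \<in> B"
    proof (cases "t \<le> T")
      case True
      have "(real T - real (t-1) + real t - 1) / \<alpha> * P (t-1) \<in> A"
        unfolding Aim by (intro imageI) (use True less.prems in simp)
      moreover have "(real T - real (t-1) + real t - 1) / \<alpha> * P (t-1) = x"
        using True less.prems PT[of "t-1"] unfolding x_def
        by (simp add: of_nat_diff add.commute)
      ultimately have "x \<in> A" by simp
      then show ?thesis using fA by simp
    next
      case False
      have "real (t - (t-T)) / \<alpha> * \<chi> (t-T) \<in> B"
        unfolding Bim by (intro imageI) (use False Tpos in simp)
      moreover have "\<chi> (t-T) = P (t-T+T-1)" using less.IH False Tpos by auto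
      moreover have "t-T+T-1 = t-1" "t+T-1 = (t-1)+T" using False by auto
      ultimately have "T / \<alpha> * P (t-1) \<in> B" using False by simp
      moreover have "T / \<alpha> * P (t-1) = x" unfolding x_def using PT[of "t-1"] False
        by (simp add: add.commute)
      ultimately show ?thesis by simp
    qed
    have fin: "finite ({Max A} \<union> B)" using fB by simp
    have "Max ({Max A} \<union> B) \<le> x" using fin MA Ble by simp
    moreover have "x \<le> Max ({Max A} \<union> B)"
    proof (cases "x \<le> Max A")
      case True
      have "Max A \<le> Max ({Max A} \<union> B)" using fin by (intro Max_ge) auto
      then show ?thesis using True by linarith
    next
      case False
      then have "x \<in> B" using wit by blast
      then show ?thesis using fin by (intro Max_ge) auto
    qed
    ultimately show ?case using ch x_def by simp
  qed
  show ?thesis using main unfolding P_def by simp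
qed

end
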